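(* Let $\mathcal{H}$ be a real $m^{\rm th}$-order $n$-dimensional Hankel tensor generated by ${\bf h}\in\mathbb{R}^{m(n-1)+1}$, where $m(n-1)$ is even, and let $r$ be the rank of its associated Hankel matrix $H$. Then $\mathcal{H}$ is a strong Hankel tensor if and only if either it admits a Vandermonde decomposition with all positive coefficients $$\mathcal{H}=\sum_{k=1}^r\alpha_k{\bf v}_k^{\circ m},\quad \alpha_k>0,\quad {\bf v}_k=(1,\xi_k,\dots,\xi_k^{n-1})^\top,\ \xi_k\in\mathbb{R},$$ or it admits an augmented Vandermonde decomposition with all positive coefficients $$\mathcal{H}=\sum_{k=1}^{r-1}\alpha_k{\bf v}_k^{\circ m}+\alpha_r{\bf e}_n^{\circ m},\quad \alpha_k>0,\quad {\bf v}_k=(1,\xi_k,\dots,\xi_k^{n-1})^\top,\ \xi_k\in\mathbb{R}.$$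
   Context: The Hankel tensor generated by ${\bf h}=(h_0,\dots,h_{m(n-1)})$ has entries $\mathcal{H}_{i_1\dots i_m}=h_{i_1+\dots+i_m}$, $0\le i_j\le n-1$. Its associated Hankel matrix is the square Hankel matrix $H$ of size $\frac{m(n-1)}{2}+1$ with $H_{ij}=h_{i+j}$ ($0\le i,j\le m(n-1)/2$). $\mathcal{H}$ is a strong Hankel tensor if $H$ is positive semi-definite. ${\bf v}^{\circ m}$ is the rank-one tensor with entries $v_{i_1}v_{i_2}\cdots v_{i_m}$, and ${\bf e}_n=(0,\dots,0,1)^\top\in\mathbb{R}^n$. *)

theory Defs
  imports "Jordan_Normal_Form.DL_Rank"
begin

text \<open>Index tuples of an m-th order n-dimensional tensor: functions
  i with i j < n for all j < m (0-based). Tensors are functions on index tuples.\<close>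

definition tensor_idx :: "nat \<Rightarrow> nat \<Rightarrow> (nat \<Rightarrow> nat) set" where
  "tensor_idx m n = {i. \<forall>j<m. i j < n}"

definition hankel_tensor :: "nat \<Rightarrow> (nat \<Rightarrow> real) \<Rightarrow> (nat \<Rightarrow> nat) \<Rightarrow> real" where
  "hankel_tensor m h i = h (\<Sum>j<m. i j)"

definition rank1_tensor :: "nat \<Rightarrow> (nat \<Rightarrow> real) \<Rightarrow> (nat \<Rightarrow> nat) \<Rightarrow> real" where
  "rank1_tensor m v i = (\<Prod>j<m. v (i j))"

definition vand_vec :: "real \<Rightarrow> nat \<Rightarrow> real" where
  "vand_vec \<xi> k = \<xi> ^ k"

definition e_last :: "nat \<Rightarrow> nat \<Rightarrow> real" where
  "e_last n k = (if k = n - 1 then 1 else 0)"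

definition hankel_size :: "nat \<Rightarrow> nat \<Rightarrow> nat" where
  "hankel_size m n = m * (n - 1) div 2 + 1"

definition hankel_matrix :: "nat \<Rightarrow> nat \<Rightarrow> (nat \<Rightarrow> real) \<Rightarrow> real mat" where
  "hankel_matrix m n h = mat (hankel_size m n) (hankel_size m n) (\<lambda>(i, j). h (i + j))"

definition psd_mat :: "real mat \<Rightarrow> bool" where
  "psd_mat A \<longleftrightarrow> A \<in> carrier_mat (dim_row A) (dim_row A) \<and> A\<^sup>T = A \<and>
     (\<forall>x \<in> carrier_vec (dim_row A). x \<bullet> (A *\<^sub>v x) \<ge> 0)"

definition strong_hankel :: "nat \<Rightarrow> nat \<Rightarrow> (nat \<Rightarrow> real) \<Rightarrow> bool" where
  "strong_hankel m n h \<longleftrightarrow> psd_mat (hankel_matrix m n h)"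

definition mat_rank :: "real mat \<Rightarrow> nat" where
  "mat_rank A = vec_space.rank (dim_row A) A"

end

theory Submission
  imports Defs "HOL-Computational_Algebra.Fundamental_Theorem_Algebra"
begin


definition cev :: "real poly \<Rightarrow> complex \<Rightarrow> complex" where
  "cev q z = poly (map_poly complex_of_real q) z"

lemma mp_add: "map_poly complex_of_real (p + q) = map_poly complex_of_real p + map_poly complex_of_real q"
  by (intro poly_eqI) (simp add: coeff_map_poly)

lemma mp_mult: "map_poly complex_of_real (p * q) = map_poly complex_of_real p * map_poly complex_of_real q"
  by (intro poly_eqI) (simp add: coeff_map_poly coeff_mult)

lemma cev_add: "cev (p + q) z = cev p z + cev q z"
  by (simp add: cev_def mp_add)

lemma cev_mult: "cev (p * q) z = cev p z * cev q z"
  by (simp add: cev_def mp_mult)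

lemma cev_real: "cev q (of_real a) = of_real (poly q a)"
  unfolding cev_def
  by (induction q) (simp_all add: map_poly_pCons)

lemma cev_pCons: "cev (pCons a q) z = of_real a + z * cev q z"
  unfolding cev_def by (simp add: map_poly_pCons)

lemma root_trichotomy:
  fixes q :: "real poly"
  shows "(\<exists>z. Im z \<noteq> 0 \<and> cev q z = 0) \<or> (\<exists>a g. q = [:-a,1:]^2 * g)
     \<or> (\<exists>S. finite S \<and> card S = degree q \<and> (\<forall>a\<in>S. poly q a = 0))"
proof (induction "degree q" arbitrary: q)
  case 0
  then show ?case by (intro disjI2) (rule exI[of _ "{}"], simp)
next
  case (Suc d)
  have "\<not> constant (poly (map_poly complex_of_real q))"
    using Suc(2) by (subst constant_degree) (simp add: degree_map_poly)
  then obtain z where z: "cev q z = 0" unfolding cev_def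
    using fundamental_theorem_of_algebra by blast
  show ?case
  proof (cases "Im z = 0")
    case False then show ?thesis using z by blast
  next
    case True
    define a where "a = Re z"
    have za: "z = of_real a" using True unfolding a_def by (simp add: complex_eq_iff)
    have "poly q a = 0" using z cev_real[of q a] za by simp
    then obtain g where g: "q = [:-a,1:] * g"
      by (metis dvdE poly_eq_0_iff_dvd)
    have qnz: "q \<noteq> 0" using Suc(2) by auto
    then have gnz: "g \<noteq> 0" using g by auto
    have "degree q = degree [:-a,1:] + degree g" unfolding g
      by (rule degree_mult_eq) (use gnz in auto)
    then have dg: "d = degree g" using Suc(2) by simp
    from Suc(1)[OF dg]
    show ?thesis
    proof (elim disjE exE conjE)
      fix w assume "Im w \<noteq> 0" "cev g w = 0"
      then show ?thesis using g cev_mult[of "[:-a,1:]" g w] by auto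
    next
      fix b h assume "g = [:-b,1:]^2 * h"
      then have "q = [:-b,1:]^2 * ([:-a,1:] * h)" using g by (simp add: algebra_simps)
      then show ?thesis by blast
    next
      fix S assume S: "finite S" "card S = degree g" "\<forall>b\<in>S. poly g b = 0"
      show ?thesis
      proof (cases "a \<in> S")
        case True
        then have "poly g a = 0" using S by auto
        then obtain h where "g = [:-a,1:] * h" by (metis dvdE poly_eq_0_iff_dvd)
        then have "q = [:-a,1:]^2 * h" using g by (simp only: power2_eq_square mult.assoc)
        then show ?thesis by blast
      next
        case False
        have "card (insert a S) = degree q" using S False Suc(2) dg by simp
        moreover have "\<forall>b\<in>insert a S. poly q b = 0" using S g \<open>poly q a = 0\<close> by auto
        ultimately show ?thesis using S by (meson finite_insert)
      qed
    qed
  qed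
qed



definition Lf :: "(nat \<Rightarrow> real) \<Rightarrow> real poly \<Rightarrow> real" where
  "Lf h f = (\<Sum>i\<le>degree f. coeff f i * h i)"

lemma Lf_bound: "degree f \<le> B \<Longrightarrow> Lf h f = (\<Sum>i\<le>B. coeff f i * h i)"
  unfolding Lf_def by (rule sum.mono_neutral_left) (auto simp: coeff_eq_0)

lemma Lf_add: "Lf h (f + g) = Lf h f + Lf h g"
proof -
  define B where "B = max (degree f) (degree g)"
  have "degree (f+g) \<le> B" unfolding B_def by (rule degree_add_le) auto
  then show ?thesis
    using Lf_bound[of f B h] Lf_bound[of g B h] Lf_bound[of "f+g" B h]
    by (simp add: B_def sum.distrib algebra_simps)
qed

lemma Lf_smult: "Lf h (smult c f) = c * Lf h f"
  using Lf_bound[of "smult c f" "degree f" h] Lf_bound[of f "degree f" h]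
  by (simp add: sum_distrib_left algebra_simps)

lemma Lf_uminus: "Lf h (- f) = - Lf h f"
  using Lf_smult[of h "-1" f] by simp

lemma Lf_diff: "Lf h (f - g) = Lf h f - Lf h g"
  using Lf_add[of h f "-g"] Lf_uminus[of h g] by simp

lemma Lf_0[simp]: "Lf h 0 = 0"
  by (simp add: Lf_def)

lemma Lf_sum: "Lf h (\<Sum>a\<in>A. F a) = (\<Sum>a\<in>A. Lf h (F a))"
  by (induction A rule: infinite_finite_induct) (simp_all add: Lf_add)

lemma Lf_monom: "Lf h (monom c k) = c * h k"
proof -
  have "Lf h (monom c k) = (\<Sum>i\<le>k. coeff (monom c k) i * h i)"
    by (rule Lf_bound) (simp add: degree_monom_le)
  also have "\<dots> = (\<Sum>i\<in>{k}. coeff (monom c k) i * h i)"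
    by (rule sum.mono_neutral_right) auto
  finally show ?thesis by simp
qed

lemma Lf_cong: "degree f \<le> M \<Longrightarrow> (\<And>t. t \<le> M \<Longrightarrow> h t = h' t) \<Longrightarrow> Lf h f = Lf h' f"
  using Lf_bound[of f M h] Lf_bound[of f M h'] by simp

lemma Lf_mult_bound:
  assumes "degree f \<le> A" "degree g \<le> B"
  shows "Lf h (f * g) = (\<Sum>i\<le>A. \<Sum>j\<le>B. coeff f i * coeff g j * h (i + j))"
proof -
  have "f * g = (\<Sum>i\<le>A. monom (coeff f i) i) * (\<Sum>j\<le>B. monom (coeff g j) j)"
    using poly_as_sum_of_monoms'[OF assms(1)] poly_as_sum_of_monoms'[OF assms(2)] by simp
  also have "\<dots> = (\<Sum>i\<le>A. \<Sum>j\<le>B. monom (coeff f i * coeff g j) (i + j))"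
    by (simp add: sum_product mult_monom)
  finally show ?thesis by (simp add: Lf_sum Lf_monom)
qed

lemma ortho_mult:
  assumes "\<And>j. j \<le> B \<Longrightarrow> Lf h (w * monom 1 j) = 0" "degree g \<le> B"
  shows "Lf h (w * g) = 0"
proof -
  have "w * g = (\<Sum>j\<le>B. smult (coeff g j) (w * monom 1 j))"
  proof -
    have e: "w * monom (coeff g j) j = smult (coeff g j) (w * monom 1 j)" for j
    proof -
      have "monom (coeff g j) j = smult (coeff g j) (monom 1 j)" by (simp add: smult_monom)
      then show ?thesis by (simp only: mult_smult_right)
    qed
    show ?thesis
      by (subst (1) poly_as_sum_of_monoms'[OF assms(2), symmetric])
         (simp only: sum_distrib_left e)
  qed
  then show ?thesis using assms(1) by (simp add: Lf_sum Lf_smult)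
qed

definition psd :: "nat \<Rightarrow> (nat \<Rightarrow> real) \<Rightarrow> bool" where
  "psd p h \<longleftrightarrow> (\<forall>w. degree w \<le> p \<longrightarrow> Lf h (w * w) \<ge> 0)"

definition ker :: "nat \<Rightarrow> (nat \<Rightarrow> real) \<Rightarrow> real poly \<Rightarrow> bool" where
  "ker p h w \<longleftrightarrow> degree w \<le> p \<and> (\<forall>j\<le>p. Lf h (w * monom 1 j) = 0)"

lemma ker_mult: "ker p h w \<Longrightarrow> degree g \<le> p \<Longrightarrow> Lf h (w * g) = 0"
  unfolding ker_def using ortho_mult[of p h w g] by blast

lemma quad_nonneg:
  fixes a b c :: real
  assumes "\<And>t. a * t + b * t * t \<ge> 0" "b \<ge> 0"
  shows "a = 0"
proof (rule ccontr)
  assume "a \<noteq> 0"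
  define t where "t = - a / (b + 1)"
  have bp: "b + 1 \<noteq> 0" using assms(2) by simp
  have e1: "a + b * t = a / (b+1)" unfolding t_def using bp by (simp add: field_simps)
  have "a * t + b * t * t = t * (a + b * t)" by (simp add: algebra_simps)
  also have "\<dots> = t * (a / (b+1))" unfolding e1 ..
  also have "\<dots> = - (a * a) / ((b+1) * (b+1))" unfolding t_def by simp
  also have "\<dots> < 0" using \<open>a \<noteq> 0\<close> assms(2)
  proof -
    have "a * a > 0" using \<open>a \<noteq> 0\<close> by (cases "a > 0") (auto simp: mult_neg_neg)
    then show ?thesis using assms(2) by (intro divide_neg_pos) auto
  qed
  finally show False using assms(1)[of t] by simp
qed

lemma Lf_cmult: "Lf h ([:t:] * f) = t * Lf h f"
  by (simp add: Lf_smult)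

lemma poly_expand: "(w + s * u) * (w + s * u) = w * w + s * (w * u) + s * (w * u) + s * (s * (u * u))"
  for w s u :: "real poly" by (simp add: algebra_simps)

lemma cs_zero:
  assumes "psd p h" "degree w \<le> p" "degree u \<le> p" "Lf h (w * w) = 0"
  shows "Lf h (w * u) = 0"
proof -
  have "2 * Lf h (w * u) * t + Lf h (u * u) * t * t \<ge> 0" for t
  proof -
    have "degree (w + [:t:] * u) \<le> p" using assms by (simp add: degree_add_le)
    then have "Lf h ((w + [:t:] * u) * (w + [:t:] * u)) \<ge> 0" using assms(1) psd_def by blast
    moreover have "(w + [:t:] * u) * (w + [:t:] * u) = w * w + [:t:] * (w * u) + [:t:] * (w * u) + [:t:] * ([:t:] * (u * u))"
      using poly_expand[of w "[:t:]" u] .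
    ultimately have "0 \<le> Lf h (w * w) + t * Lf h (w * u) + t * Lf h (w * u) + t * (t * Lf h (u * u))"
      by (simp only: Lf_add Lf_cmult)
    then show ?thesis using assms(4) by (simp add: algebra_simps)
  qed
  moreover have "Lf h (u * u) \<ge> 0" using assms psd_def by blast
  ultimately have "2 * Lf h (w * u) = 0" by (intro quad_nonneg[of "2 * Lf h (w * u)" "Lf h (u*u)"]) auto
  then show ?thesis by simp
qed

lemma cs_ker:
  assumes "psd p h" "degree w \<le> p" "Lf h (w * w) = 0"
  shows "ker p h w"
proof -
  have "Lf h (w * monom 1 j) = 0" if "j \<le> p" for j
  proof -
    have "degree (monom (1::real) j) \<le> p" using that by (simp add: degree_monom_eq)
    then show ?thesis using cs_zero[OF assms(1,2) _ assms(3)] by blast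
  qed
  then show ?thesis unfolding ker_def using assms(2) by blast
qed



lemma ring_sq_swap: "(x * w) * (x * w) = w * (x * x * w)" for x w :: "'a::comm_ring"
  by (simp add: algebra_simps)

lemma ring_swap3: "(a * q) * b = q * (a * b)" for a q b :: "'a::comm_ring"
  by (simp add: algebra_simps)

lemma ker_shift:
  assumes "psd p h" "ker p h w" "degree w + 2 \<le> p"
  shows "ker p h (monom 1 1 * w)"
proof -
  have dm: "degree (monom (1::real) 1 * w) \<le> 1 + degree w"
    using degree_mult_le[of "monom (1::real) 1" w] by (simp add: degree_monom_eq)
  have d2: "degree (monom (1::real) 1 * monom 1 1 * w) \<le> 2 + degree w"
    using degree_mult_le[of "monom (1::real) 1 * monom 1 1" w] by (simp add: mult_monom degree_monom_eq)
  have "Lf h ((monom 1 1 * w) * (monom 1 1 * w)) = Lf h (w * (monom 1 1 * monom 1 1 * w))"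
    by (simp only: ring_sq_swap)
  also have "\<dots> = 0" by (rule ker_mult[OF assms(2)]) (use d2 assms(3) in linarith)
  finally show ?thesis using assms(1) dm assms(3) by (intro cs_ker) auto
qed

lemma ker_pow:
  assumes "psd p h" "ker p h q"
  shows "j = 0 \<or> j + degree q + 1 \<le> p \<Longrightarrow> ker p h (monom 1 j * q)"
proof (induction j)
  case 0 then show ?case using assms(2) by simp
next
  case (Suc j)
  then have "ker p h (monom 1 j * q)" by (cases "j = 0") auto
  moreover have "degree (monom (1::real) j * q) \<le> j + degree q"
    using degree_mult_le[of "monom (1::real) j" q] by (simp add: degree_monom_eq)
  ultimately have "ker p h (monom 1 1 * (monom 1 j * q))"
    using Suc.prems by (intro ker_shift[OF assms(1)]) auto
  moreover have "monom 1 1 * (monom 1 j * q) = monom 1 (Suc j) * q"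
  proof -
    have "monom (1::real) 1 * monom 1 j = monom 1 (Suc j)" by (simp add: mult_monom)
    then show ?thesis by (simp only: mult.assoc[symmetric])
  qed
  ultimately show ?case by metis
qed

lemma ker_high:
  assumes "psd p h" "ker p h q" "t + degree q < 2 * p"
  shows "Lf h (q * monom 1 t) = 0"
proof (cases "t \<le> p")
  case True then show ?thesis using assms(2) ker_def by blast
next
  case False
  define j where "j = t - p"
  have "j + degree q + 1 \<le> p" using False assms(3) unfolding j_def by linarith
  then have "ker p h (monom 1 j * q)" using ker_pow[OF assms(1,2)] by blast
  then have "Lf h ((monom 1 j * q) * monom 1 p) = 0" using ker_def by blast
  moreover have "(monom 1 j * q) * monom 1 p = q * monom (1::real) t"
  proof -
    have "monom (1::real) j * monom 1 p = monom 1 t" using False unfolding j_def by (simp add: mult_monom)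
    then show ?thesis by (simp only: ring_swap3)
  qed
  ultimately show ?thesis by simp
qed

lemma ker_mult_high:
  assumes "psd p h" "ker p h q" "degree g + degree q < 2 * p"
  shows "Lf h (q * g) = 0"
proof (rule ortho_mult[of "2 * p - 1 - degree q"])
  show "degree g \<le> 2 * p - 1 - degree q" using assms(3) by linarith
  fix j assume "j \<le> 2 * p - 1 - degree q"
  then have "j + degree q < 2 * p" using assms(3) by linarith
  then show "Lf h (q * monom 1 j) = 0" by (rule ker_high[OF assms(1,2)])
qed

lemma ring_id1: "Q = x * x + c \<Longrightarrow> (g * Q) * g = (x * g) * (x * g) + c * (g * g)"
  for Q x c g :: "'a::comm_ring" by (simp add: algebra_simps)

lemma ring_id2: "(x^2 * g) * g = (x * g) * (x * g)"
  for x g :: "'a::comm_ring_1" by (simp add: algebra_simps power2_eq_square)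

lemma cev_0: "cev 0 z = 0" by (simp add: cev_def)

lemma cev_Q:
  fixes z :: complex
  shows "cev [:Re z * Re z + Im z * Im z, -2 * Re z, 1:] z = 0"
proof -
  have "cev [:Re z * Re z + Im z * Im z, -2 * Re z, 1:] z
     = of_real (Re z * Re z + Im z * Im z) + z * (of_real (-2 * Re z) + z * 1)"
    by (simp add: cev_pCons cev_0)
  also have "\<dots> = 0" by (simp add: complex_eq_iff algebra_simps)
  finally show ?thesis .
qed

lemma min_ker_roots:
  assumes psd: "psd p h" and kq: "ker p h q" and qnz: "q \<noteq> 0"
    and minq: "\<And>w. ker p h w \<Longrightarrow> w \<noteq> 0 \<Longrightarrow> degree q \<le> degree w"
  shows "\<exists>S. finite S \<and> card S = degree q \<and> (\<forall>a\<in>S. poly q a = 0)"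
proof -
  have dq: "degree q \<le> p" using kq ker_def by blast
  from root_trichotomy[of q] show ?thesis
  proof (elim disjE exE conjE)
    fix z assume imz: "Im z \<noteq> 0" and cz: "cev q z = 0"
    define a where "a = Re z"
    define b where "b = Im z"
    define Q where "Q = [:a * a + b * b, -2 * a, 1:]"
    have cQ: "cev Q z = 0" unfolding Q_def a_def b_def by (rule cev_Q)
    have Qnz: "Q \<noteq> 0" and dQ: "degree Q = 2" unfolding Q_def by auto
    define g where "g = q div Q"
    define \<rho> where "\<rho> = q mod Q"
    have qe: "q = g * Q + \<rho>" unfolding g_def \<rho>_def by simp
    have "cev \<rho> z = 0" using cz cQ qe by (metis add_0 cev_add cev_mult mult_zero_right)
    have dr: "degree \<rho> < 2"
      using degree_mod_less[OF Qnz, of q] dQ unfolding \<rho>_def by auto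
    have re: "\<rho> = [:coeff \<rho> 0, coeff \<rho> 1:]"
      by (rule poly_eqI) (use dr in \<open>auto simp: coeff_pCons coeff_eq_0 split: nat.splits\<close>)
    have "cev \<rho> z = of_real (coeff \<rho> 0) + z * of_real (coeff \<rho> 1)"
      by (subst re) (simp add: cev_pCons cev_0)
    then have "of_real (coeff \<rho> 0) + z * of_real (coeff \<rho> 1) = 0" using \<open>cev \<rho> z = 0\<close> by simp
    then have "coeff \<rho> 1 * Im z = 0" "coeff \<rho> 0 + coeff \<rho> 1 * Re z = 0"
      by (auto simp: complex_eq_iff mult.commute)
    then have "coeff \<rho> 1 = 0" "coeff \<rho> 0 = 0" using imz by auto
    then have "\<rho> = 0" using re by simp
    then have qgQ: "q = g * Q" using qe by simp
    then have gnz: "g \<noteq> 0" using qnz by auto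
    have dqg: "degree q = degree g + 2" using qgQ gnz Qnz dQ by (simp add: degree_mult_eq)
    define u where "u = [:-a, 1:] * g"
    have du: "degree u = degree g + 1" unfolding u_def by (subst degree_mult_eq) (use gnz in auto)
    have "Q = [:-a,1:] * [:-a,1:] + [:b * b:]" unfolding Q_def by simp
    then have "q * g = u * u + [:b*b:] * (g * g)"
      unfolding qgQ u_def by (rule ring_id1)
    moreover have "Lf h (q * g) = 0" using kq dqg dq by (intro ker_mult) auto
    ultimately have s0: "Lf h (u * u) + b * b * Lf h (g * g) = 0" by (simp add: Lf_add Lf_smult)
    have "Lf h (u * u) \<ge> 0" "Lf h (g * g) \<ge> 0"
      using psd du dqg dq unfolding psd_def by auto
    moreover have "b * b > 0" using imz unfolding b_def by (cases "Im z > 0") (auto simp: mult_neg_neg)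
    ultimately have "b * b * Lf h (g * g) \<ge> 0" by simp
    then have "b * b * Lf h (g * g) = 0" using s0 \<open>Lf h (u * u) \<ge> 0\<close> by linarith
    moreover have "b \<noteq> 0" using \<open>b * b > 0\<close> by auto
    ultimately have "Lf h (g * g) = 0" by simp
    then have "ker p h g" using psd dqg dq by (intro cs_ker) auto
    from minq[OF this gnz] dqg show ?thesis by simp
  next
    fix a g assume qag: "q = [:-a,1:]^2 * g"
    then have gnz: "g \<noteq> 0" using qnz by auto
    define u where "u = [:-a, 1:] * g"
    have du: "degree u = degree g + 1" unfolding u_def by (subst degree_mult_eq) (use gnz in auto)
    have "degree q = degree ([:-a,1:]^2) + degree g" unfolding qag by (subst degree_mult_eq) (use gnz in auto)
    then have dqg: "degree q = degree g + 2" by (simp add: degree_power_eq)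
    have "q * g = u * u" unfolding qag u_def by (rule ring_id2)
    moreover have "Lf h (q * g) = 0" using kq dqg dq by (intro ker_mult) auto
    ultimately have "ker p h u" using psd du dqg dq by (intro cs_ker) auto
    moreover have "u \<noteq> 0" using du by auto
    ultimately have "degree q \<le> degree u" by (rule minq)
    then show ?thesis using du dqg by simp
  next
    fix S assume "finite S" "card S = degree q" "\<forall>a\<in>S. poly q a = 0"
    then show ?thesis by blast
  qed
qed



definition lag :: "real set \<Rightarrow> real \<Rightarrow> real poly" where
  "lag S a = smult (1 / (\<Prod>b\<in>S-{a}. (a - b))) (\<Prod>b\<in>S-{a}. [:-b,1:])"

lemma lag_poly:
  assumes "finite S" "a \<in> S" "c \<in> S"
  shows "poly (lag S a) c = (if c = a then 1 else 0)"
proof (cases "c = a")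
  case True
  have "(\<Prod>b\<in>S-{a}. (a - b)) \<noteq> 0" using assms(1) by (simp)
  then show ?thesis using True by (simp add: lag_def poly_prod)
next
  case False
  then have "(\<Prod>b\<in>S-{a}. poly [:-b,1:] c) = 0" using assms
    by (intro prod_zero) auto
  then show ?thesis using False by (simp add: lag_def poly_prod)
qed

lemma lag_degree:
  assumes "finite S" "a \<in> S"
  shows "degree (lag S a) < card S"
proof -
  have "degree (\<Prod>b\<in>S-{a}. [:-b,1:]) \<le> (\<Sum>b\<in>S-{a}. degree [:-b,(1::real):])"
    using degree_prod_sum_le[of "S-{a}" "\<lambda>b. [:-b,(1::real):]"] assms(1) by (simp add: o_def)
  also have "\<dots> = card (S - {a})" by simp
  also have "\<dots> < card S"
  proof -
    have "card S > 0" using assms card_gt_0_iff by blast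
    then show ?thesis using assms by simp
  qed
  finally show ?thesis unfolding lag_def by (meson degree_smult_le le_less_trans)
qed

lemma interp:
  assumes "finite S" "degree r < card S"
  shows "r = (\<Sum>a\<in>S. smult (poly r a) (lag S a))"
proof (rule ccontr)
  define D where "D = r - (\<Sum>a\<in>S. smult (poly r a) (lag S a))"
  assume "r \<noteq> (\<Sum>a\<in>S. smult (poly r a) (lag S a))"
  then have Dnz: "D \<noteq> 0" unfolding D_def by simp
  have "degree (\<Sum>a\<in>S. smult (poly r a) (lag S a)) \<le> card S - 1"
  proof (rule degree_sum_le[OF assms(1)])
    fix a assume "a \<in> S"
    have "degree (smult (poly r a) (lag S a)) \<le> degree (lag S a)" by (rule degree_smult_le)
    then show "degree (smult (poly r a) (lag S a)) \<le> card S - 1"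
      using lag_degree[OF assms(1) \<open>a \<in> S\<close>] by linarith
  qed
  moreover have "degree r \<le> card S - 1" using assms(2) by simp
  ultimately have "degree D \<le> card S - 1" unfolding D_def by (rule degree_diff_le[rotated])
  then have dD: "degree D < card S" using assms(2) by simp
  have "poly D c = 0" if "c \<in> S" for c
  proof -
    have "(\<Sum>a\<in>S. poly r a * poly (lag S a) c) = (\<Sum>a\<in>{c}. poly r a * poly (lag S a) c)"
      by (rule sum.mono_neutral_right) (use assms(1) that lag_poly[OF assms(1)] in auto)
    then show ?thesis unfolding D_def using that lag_poly[OF assms(1) that that]
      by (simp add: poly_sum)
  qed
  then have "S \<subseteq> {x. poly D x = 0}" by auto
  then have "card S \<le> card {x. poly D x = 0}" using poly_roots_finite[OF Dnz] by (rule card_mono[rotated])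
  also have "\<dots> \<le> degree D" by (rule card_poly_roots_bound[OF Dnz])
  finally show False using dD by simp
qed

locale quad =
  fixes p :: nat and h :: "nat \<Rightarrow> real" and q :: "real poly" and S :: "real set"
  assumes psd: "psd p h" and p1: "1 \<le> p" and kq: "ker p h q" and monic: "lead_coeff q = 1"
    and minq: "\<And>w. ker p h w \<Longrightarrow> w \<noteq> 0 \<Longrightarrow> degree q \<le> degree w"
    and finS: "finite S" and cardS: "card S = degree q" and roots: "\<And>a. a \<in> S \<Longrightarrow> poly q a = 0"
begin

definition \<alpha> :: "real \<Rightarrow> real" where "\<alpha> a = Lf h (lag S a)"

lemma qnz: "q \<noteq> 0" using monic by auto

lemma dq: "degree q \<le> p" using kq ker_def by blast

lemma quad1:
  assumes "degree f < 2 * p"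
  shows "Lf h f = (\<Sum>a\<in>S. \<alpha> a * poly f a)"
proof -
  define g where "g = f div q"
  define \<rho> where "\<rho> = f mod q"
  have fe: "f = g * q + \<rho>" unfolding g_def \<rho>_def by simp
  have "Lf h (q * g) = 0"
  proof (cases "degree f < degree q")
    case True
    then have "g = 0" unfolding g_def by (rule div_poly_less)
    then show ?thesis by simp
  next
    case False
    have "degree g + degree q < 2 * p"
    proof (cases "g = 0")
      case True then show ?thesis using dq p1 by simp
    next
      case gnz: False
      have "degree (g * q) = degree g + degree q" using gnz qnz by (rule degree_mult_eq)
      moreover have "degree (g * q) \<le> max (degree f) (degree \<rho>)"
      proof -
        have "g * q = f - \<rho>" using fe by simp
        then show ?thesis by (simp add: degree_diff_le)
      qed
      moreover have "degree \<rho> \<le> degree f"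
        using degree_mod_less[OF qnz, of f] False unfolding \<rho>_def by auto
      ultimately show ?thesis using assms by simp
    qed
    then show ?thesis by (intro ker_mult_high[OF psd kq]) simp
  qed
  then have Lfe: "Lf h f = Lf h \<rho>" using fe by (simp add: Lf_add mult.commute)
  have pe: "poly f a = poly \<rho> a" if "a \<in> S" for a using fe roots[OF that] by simp
  have "Lf h \<rho> = (\<Sum>a\<in>S. \<alpha> a * poly \<rho> a)"
  proof (cases "\<rho> = 0")
    case True then show ?thesis by simp
  next
    case False
    then have "degree \<rho> < card S" using degree_mod_less[OF qnz, of f] cardS unfolding \<rho>_def by auto
    then have "\<rho> = (\<Sum>a\<in>S. smult (poly \<rho> a) (lag S a))" by (rule interp[OF finS])
    then have "Lf h \<rho> = (\<Sum>a\<in>S. poly \<rho> a * Lf h (lag S a))"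
      by (metis (no_types, lifting) Lf_smult Lf_sum sum.cong)
    then show ?thesis by (simp add: \<alpha>_def mult.commute)
  qed
  then show ?thesis using Lfe pe by simp
qed

lemma alpha_pos:
  assumes "a \<in> S"
  shows "\<alpha> a > 0"
proof -
  have dl: "degree (lag S a) < degree q" using lag_degree[OF finS assms] cardS by simp
  have "degree (lag S a * lag S a) < 2 * p"
    using degree_mult_le[of "lag S a" "lag S a"] dl dq by linarith
  then have "Lf h (lag S a * lag S a) = (\<Sum>b\<in>S. \<alpha> b * poly (lag S a * lag S a) b)" by (rule quad1)
  also have "\<dots> = (\<Sum>b\<in>{a}. \<alpha> b * poly (lag S a * lag S a) b)"
    by (rule sum.mono_neutral_right) (use finS assms lag_poly[OF finS assms] in auto)
  also have "\<dots> = \<alpha> a" using lag_poly[OF finS assms assms] by simp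
  finally have e: "Lf h (lag S a * lag S a) = \<alpha> a" .
  have "\<alpha> a \<ge> 0" using psd dl dq unfolding e[symmetric] psd_def by auto
  moreover have "\<alpha> a \<noteq> 0"
  proof
    assume "\<alpha> a = 0"
    then have "ker p h (lag S a)" using e dl dq by (intro cs_ker[OF psd]) auto
    moreover have "lag S a \<noteq> 0" using lag_poly[OF finS assms assms] by auto
    ultimately have "degree q \<le> degree (lag S a)" by (rule minq)
    then show False using dl by simp
  qed
  ultimately show ?thesis by simp
qed

definition u :: "real poly" where "u = monom 1 (p - degree q) * q"

lemma du: "degree u = p" and lu: "lead_coeff u = 1"
proof -
  have "degree (monom (1::real) (p - degree q)) = p - degree q" by (rule degree_monom_eq) simp
  moreover have "monom (1::real) (p - degree q) \<noteq> 0" by simp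
  ultimately show "degree u = p" unfolding u_def using dq qnz by (subst degree_mult_eq) auto
  show "lead_coeff u = 1" unfolding u_def by (simp only: lead_coeff_mult lead_coeff_monom monic mult_1)
qed

lemma u_roots: "a \<in> S \<Longrightarrow> poly u a = 0"
  unfolding u_def using roots by simp

definition \<beta> :: real where "\<beta> = Lf h (u * u)"

lemma beta_nonneg: "\<beta> \<ge> 0"
  using psd du unfolding \<beta>_def psd_def by auto

lemma beta_zero: "degree q = p \<Longrightarrow> \<beta> = 0"
  unfolding \<beta>_def u_def using ker_mult[OF kq, of q] dq by simp

lemma quad2:
  assumes "degree f \<le> 2 * p"
  shows "Lf h f = (\<Sum>a\<in>S. \<alpha> a * poly f a) + \<beta> * coeff f (2 * p)"
proof -
  define c where "c = coeff f (2 * p)"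
  define r where "r = f - smult c (u * u)"
  have duu: "degree (u * u) = 2 * p" using du lu by (subst degree_mult_eq) auto
  have cuu: "coeff (u * u) (2 * p) = 1" using duu lead_coeff_mult[of u u] lu by simp
  have "degree r \<le> 2 * p" unfolding r_def using assms duu
    by (intro degree_diff_le) (auto intro: order.trans[OF degree_smult_le])
  moreover have "coeff r (2 * p) = 0" unfolding r_def c_def using cuu by simp
  ultimately have dr: "degree r < 2 * p"
  proof (cases "degree r = 2 * p")
    case True
    then have "lead_coeff r = 0" using \<open>coeff r (2 * p) = 0\<close> by simp
    then have "r = 0" by simp
    then show ?thesis using p1 by simp
  qed auto
  have "Lf h f = c * \<beta> + Lf h r" unfolding r_def \<beta>_def by (simp add: Lf_diff Lf_smult)
  also have "Lf h r = (\<Sum>a\<in>S. \<alpha> a * poly r a)" by (rule quad1[OF dr])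
  also have "\<dots> = (\<Sum>a\<in>S. \<alpha> a * poly f a)"
    by (rule sum.cong) (simp_all add: r_def u_roots)
  finally show ?thesis unfolding c_def by simp
qed

lemma repr:
  assumes "t \<le> 2 * p"
  shows "h t = (\<Sum>a\<in>S. \<alpha> a * a ^ t) + (if t = 2 * p then \<beta> else 0)"
  using quad2[of "monom 1 t"] assms by (simp add: Lf_monom degree_monom_eq poly_monom)

end



definition Hm :: "nat \<Rightarrow> (nat \<Rightarrow> real) \<Rightarrow> real mat" where
  "Hm N h = mat N N (\<lambda>(i,j). h (i + j))"

definition vp :: "nat \<Rightarrow> real vec \<Rightarrow> real poly" where
  "vp N x = (\<Sum>i<N. monom (x $ i) i)"

lemma coeff_vp: "coeff (vp N x) k = (if k < N then x $ k else 0)"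
proof -
  have "coeff (vp N x) k = (\<Sum>i<N. if i = k then x $ i else 0)"
    unfolding vp_def by (simp add: coeff_sum coeff_monom)
  also have "\<dots> = (if k < N then x $ k else 0)"
    by (simp add: sum.delta)
  finally show ?thesis .
qed

lemma degree_vp: "degree (vp N x) \<le> N - 1"
  unfolding vp_def
proof (rule degree_sum_le)
  fix i assume "i \<in> {..<N}"
  then show "degree (monom (x $ i) i) \<le> N - 1"
    using degree_monom_le[of "x $ i" i] by simp
qed simp

lemma vp_vec: "degree w < N \<Longrightarrow> vp N (vec N (coeff w)) = w"
  by (rule poly_eqI) (auto simp: coeff_vp coeff_eq_0)

lemma vp_zero: "x \<in> carrier_vec N \<Longrightarrow> vp N x = 0 \<Longrightarrow> x = 0\<^sub>v N"
proof (rule eq_vecI)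
  fix i assume "x \<in> carrier_vec N" "vp N x = 0" "i < dim_vec (0\<^sub>v N :: real vec)"
  then show "x $ i = 0\<^sub>v N $ i" using coeff_vp[of N x i] by simp
qed auto

lemma Lf_mult_monom: "Lf h (w * monom c j) = c * Lf h (w * monom 1 j)"
proof -
  have "smult c (w * monom 1 j) = w * monom c j"
    by (simp only: mult_smult_right[symmetric] smult_monom mult_1_right)
  then have "w * monom c j = smult c (w * monom 1 j)" by (rule sym)
  then show ?thesis by (simp add: Lf_smult)
qed

lemma Lf_vp_monom: "Lf h (vp N x * monom 1 j) = (\<Sum>i<N. x $ i * h (i + j))"
proof -
  have "vp N x * monom 1 j = (\<Sum>i<N. monom (x $ i) (i + j))"
    unfolding vp_def by (simp add: sum_distrib_right mult_monom)
  then show ?thesis by (simp add: Lf_sum Lf_monom)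
qed

lemma Hm_mult:
  assumes "x \<in> carrier_vec N" "j < N"
  shows "(Hm N h *\<^sub>v x) $ j = Lf h (vp N x * monom 1 j)"
proof -
  have "(Hm N h *\<^sub>v x) $ j = (\<Sum>i\<in>{0..<N}. h (j + i) * x $ i)"
    using assms by (simp add: Hm_def scalar_prod_def)
  also have "\<dots> = (\<Sum>i<N. x $ i * h (i + j))"
    by (simp add: lessThan_atLeast0 add.commute mult.commute)
  finally show ?thesis unfolding Lf_vp_monom .
qed

lemma Hm_quad:
  assumes "x \<in> carrier_vec N"
  shows "x \<bullet> (Hm N h *\<^sub>v x) = Lf h (vp N x * vp N x)"
proof -
  have "x \<bullet> (Hm N h *\<^sub>v x) = (\<Sum>j<N. x $ j * Lf h (vp N x * monom 1 j))"
    using assms Hm_mult[OF assms] by (simp add: scalar_prod_def lessThan_atLeast0 Hm_def)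
  also have "\<dots> = (\<Sum>j<N. Lf h (vp N x * monom (x $ j) j))"
    by (intro sum.cong refl) (rule Lf_mult_monom[symmetric])
  also have "\<dots> = Lf h (\<Sum>j<N. vp N x * monom (x $ j) j)"
    by (simp only: Lf_sum)
  also have "\<dots> = Lf h (vp N x * vp N x)"
    by (simp only: sum_distrib_left[symmetric]) (simp only: vp_def)
  finally show ?thesis .
qed

lemma psd_iff:
  assumes "N = p + 1"
  shows "psd_mat (Hm N h) \<longleftrightarrow> psd p h"
proof
  assume a: "psd_mat (Hm N h)"
  show "psd p h" unfolding psd_def
  proof (intro allI impI)
    fix w :: "real poly" assume "degree w \<le> p"
    then have "vp N (vec N (coeff w)) = w" using assms by (intro vp_vec) simp
    moreover have "vec N (coeff w) \<bullet> (Hm N h *\<^sub>v vec N (coeff w)) \<ge> 0"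
      using a unfolding psd_mat_def by (simp add: Hm_def)
    ultimately show "Lf h (w * w) \<ge> 0" using Hm_quad[of "vec N (coeff w)" N h] by simp
  qed
next
  assume a: "psd p h"
  have "(Hm N h)\<^sup>T = Hm N h" by (rule eq_matI) (auto simp: Hm_def add.commute)
  moreover have "x \<bullet> (Hm N h *\<^sub>v x) \<ge> 0" if "x \<in> carrier_vec N" for x
  proof -
    have "degree (vp N x) \<le> p" using degree_vp[of N x] assms by simp
    then show ?thesis using a that Hm_quad[OF that] unfolding psd_def by simp
  qed
  ultimately show "psd_mat (Hm N h)" unfolding psd_mat_def by (auto simp: Hm_def)
qed

lemma ker_iff:
  assumes "N = p + 1" "x \<in> carrier_vec N"
  shows "Hm N h *\<^sub>v x = 0\<^sub>v N \<longleftrightarrow> ker p h (vp N x)"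
proof -
  have "degree (vp N x) \<le> p" using degree_vp[of N x] assms by simp
  moreover have "Hm N h *\<^sub>v x = 0\<^sub>v N \<longleftrightarrow> (\<forall>j<N. (Hm N h *\<^sub>v x) $ j = 0)"
    by (auto simp: Hm_def vec_eq_iff)
  ultimately show ?thesis unfolding ker_def using Hm_mult[OF assms(2)] assms(1) by auto
qed



lemma delta_sum: "a < (s::nat) \<Longrightarrow> (\<Sum>k<s. (if k = a then 1 else 0) * f k) = (f a :: real)"
proof -
  assume "a < s"
  have "(\<Sum>k<s. (if k = a then 1 else 0) * f k) = (\<Sum>k<s. if k = a then f k else 0)"
    by (rule sum.cong) auto
  also have "\<dots> = f a" using \<open>a < s\<close> by (subst sum.delta) auto
  finally show ?thesis .
qed

lemma rank_lower:
  assumes sel: "\<And>k. k < s \<Longrightarrow> sel k < N"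
    and ind: "\<And>y. y \<in> carrier_vec s \<Longrightarrow> (\<And>j. j < N \<Longrightarrow> (\<Sum>k<s. y $ k * h (j + sel k)) = 0) \<Longrightarrow> y = 0\<^sub>v s"
  shows "s \<le> vec_space.rank N (Hm N h)"
proof -
  interpret V: vec_space "TYPE(real)" N .
  define C where "C = mat N s (\<lambda>(i,k). h (i + sel k))"
  have Cc: "C \<in> carrier_mat N s" unfolding C_def by simp
  have Hc: "Hm N h \<in> carrier_mat N N" unfolding Hm_def by simp
  have Cmult: "(C *\<^sub>v y) $ j = (\<Sum>k<s. y $ k * h (j + sel k))" if "y \<in> carrier_vec s" "j < N" for y j
    using that by (simp add: C_def scalar_prod_def lessThan_atLeast0 mult.commute)
  have inj: "y = 0\<^sub>v s" if "y \<in> carrier_vec s" "C *\<^sub>v y = 0\<^sub>v N" for y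
  proof (rule ind[OF that(1)])
    fix j assume "j < N"
    then show "(\<Sum>k<s. y $ k * h (j + sel k)) = 0"
      using Cmult[OF that(1) \<open>j < N\<close>] that(2) by simp
  qed
  have colC: "col C k = col (Hm N h) (sel k)" if "k < s" for k
    by (rule eq_vecI) (use that sel in \<open>auto simp: C_def Hm_def\<close>)
  have sub: "set (cols C) \<subseteq> set (cols (Hm N h))"
  proof
    fix c assume "c \<in> set (cols C)"
    then obtain k where k0: "k < length (cols C)" "cols C ! k = c"
      unfolding in_set_conv_nth by blast
    then have k: "k < s" "c = col C k" using Cc by auto
    have ck: "c = cols (Hm N h) ! sel k" using colC sel Hc k by auto
    have mem: "cols (Hm N h) ! sel k \<in> set (cols (Hm N h))"
      by (rule nth_mem) (use sel k Hc in simp)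
    show "c \<in> set (cols (Hm N h))" unfolding ck by (rule mem)
  qed
  have dist: "distinct (cols C)"
  proof (rule ccontr)
    assume "\<not> distinct (cols C)"
    then obtain k1 k2 where kk0: "k1 < length (cols C)" "k2 < length (cols C)" "k1 \<noteq> k2" "cols C ! k1 = cols C ! k2"
      unfolding distinct_conv_nth by blast
    then have kk: "k1 < s" "k2 < s" "k1 \<noteq> k2" "cols C ! k1 = cols C ! k2" using Cc by auto
    then have ceq: "col C k1 = col C k2" using Cc by simp
    define y where "y = vec s (\<lambda>k. (if k = k1 then 1 else 0) - (if k = k2 then 1 else (0::real)))"
    have yc: "y \<in> carrier_vec s" unfolding y_def by simp
    have "C *\<^sub>v y = 0\<^sub>v N"
    proof (rule eq_vecI)
      fix j assume "j < dim_vec (0\<^sub>v N :: real vec)"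
      then have j: "j < N" by simp
      have "(C *\<^sub>v y) $ j = (\<Sum>k<s. ((if k = k1 then 1 else 0) - (if k = k2 then 1 else 0)) * h (j + sel k))"
        unfolding Cmult[OF yc j] by (intro sum.cong) (simp_all add: y_def)
      also have "\<dots> = h (j + sel k1) - h (j + sel k2)"
        using kk by (simp only: left_diff_distrib sum_subtractf delta_sum)
      also have "\<dots> = col C k1 $ j - col C k2 $ j" using j kk(1,2) by (simp add: C_def)
      also have "\<dots> = 0" unfolding ceq by simp
      finally show "(C *\<^sub>v y) $ j = 0\<^sub>v N $ j" using j by simp
    qed (use Cc in simp)
    then have "y = 0\<^sub>v s" using inj yc by blast
    moreover have "y $ k1 = 1" using kk unfolding y_def by simp
    ultimately show False using kk by simp
  qed
  have li: "V.lin_indpt (set (cols C))"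
  proof
    assume "V.lin_dep (set (cols C))"
    then obtain v where "v \<in> carrier_vec s" "v \<noteq> 0\<^sub>v s" "C *\<^sub>v v = 0\<^sub>v N"
      using V.lin_depE[OF Cc _ dist] by blast
    then show False using inj by blast
  qed
  have "card (set (cols C)) \<le> V.rank (Hm N h)"
    by (rule V.rank_ge_card_indpt[OF Hc sub li])
  moreover have "card (set (cols C)) = s" using distinct_card[OF dist] Cc by simp
  ultimately show ?thesis by simp
qed

lemma rank_upper:
  fixes \<alpha> :: "real \<Rightarrow> real"
  assumes "finite S"
  shows "vec_space.rank N (mat N N (\<lambda>(i,j). \<Sum>a\<in>S. \<alpha> a * a ^ i * a ^ j)) \<le> card S"
  using assms
proof (induction S rule: finite_induct)
  case empty
  have e: "mat N N (\<lambda>(i,j). \<Sum>a\<in>{}. \<alpha> a * a ^ i * a ^ j) = (0\<^sub>m N N :: real mat)"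
    by (rule eq_matI) auto
  show ?case unfolding e by (simp add: vec_space.rank_0I)
next
  case (insert a S)
  define A where "A = mat N N (\<lambda>(i,j). \<Sum>a\<in>S. \<alpha> a * a ^ i * a ^ j)"
  define B where "B = mat N N (\<lambda>(i,j). \<alpha> a * a ^ i * a ^ j)"
  have "mat N N (\<lambda>(i,j). \<Sum>b\<in>insert a S. \<alpha> b * b ^ i * b ^ j) = B + A"
    by (rule eq_matI) (use insert in \<open>auto simp: A_def B_def\<close>)
  moreover have "vec_space.rank N (B + A) \<le> vec_space.rank N B + vec_space.rank N A"
    by (rule vec_space.rank_subadditive) (auto simp: A_def B_def)
  moreover have "vec_space.rank N B \<le> 1"
    by (rule vec_space.rank_le_1_product_entries[of B N N "\<lambda>r. \<alpha> a * a ^ r" "\<lambda>c. a ^ c"])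
       (auto simp: B_def)
  ultimately show ?case using insert A_def by simp
qed

lemma rank_upper2:
  fixes \<alpha> :: "real \<Rightarrow> real" and \<beta> :: real
  assumes "finite S"
  shows "vec_space.rank N (mat N N (\<lambda>(i,j). (\<Sum>a\<in>S. \<alpha> a * a ^ i * a ^ j) + (if i = k \<and> j = k then \<beta> else 0)))
     \<le> card S + 1"
proof -
  define A where "A = mat N N (\<lambda>(i,j). \<Sum>a\<in>S. \<alpha> a * a ^ i * a ^ j)"
  define B where "B = mat N N (\<lambda>(i,j). if i = k \<and> j = k then \<beta> else (0::real))"
  have "mat N N (\<lambda>(i,j). (\<Sum>a\<in>S. \<alpha> a * a ^ i * a ^ j) + (if i = k \<and> j = k then \<beta> else 0)) = A + B"
    by (rule eq_matI) (auto simp: A_def B_def)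
  moreover have "vec_space.rank N (A + B) \<le> vec_space.rank N A + vec_space.rank N B"
    by (rule vec_space.rank_subadditive) (auto simp: A_def B_def)
  moreover have "vec_space.rank N B \<le> 1"
    by (rule vec_space.rank_le_1_product_entries[of B N N "\<lambda>r. if r = k then \<beta> else 0" "\<lambda>c. if c = k then 1 else 0"])
       (auto simp: B_def)
  moreover have "vec_space.rank N A \<le> card S" unfolding A_def by (rule rank_upper[OF assms])
  ultimately show ?thesis by simp
qed



lemma min_ker_exists:
  assumes "\<exists>w. ker p h w \<and> w \<noteq> 0"
  obtains q where "ker p h q" "q \<noteq> 0" "lead_coeff q = 1"
    "\<And>w. ker p h w \<Longrightarrow> w \<noteq> 0 \<Longrightarrow> degree q \<le> degree w"
proof -
  define P where "P d \<longleftrightarrow> (\<exists>w. ker p h w \<and> w \<noteq> 0 \<and> degree w = d)" for d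
  have "\<exists>d. P d" using assms unfolding P_def by blast
  then have "P (LEAST d. P d)" by (rule LeastI_ex)
  then obtain q0 where q0: "ker p h q0" "q0 \<noteq> 0" "degree q0 = (LEAST d. P d)" unfolding P_def by blast
  have minq0: "degree q0 \<le> degree w" if "ker p h w" "w \<noteq> 0" for w
    unfolding q0(3) by (rule Least_le) (use that in \<open>auto simp: P_def\<close>)
  define c where "c = 1 / lead_coeff q0"
  have cnz: "c \<noteq> 0" using q0(2) unfolding c_def by simp
  define q where "q = smult c q0"
  have dq: "degree q = degree q0" unfolding q_def using cnz by simp
  have "ker p h q" unfolding ker_def
  proof (intro conjI allI impI)
    show "degree q \<le> p" using dq q0(1) ker_def by simp
    fix j assume "j \<le> p"
    have "Lf h (q * monom 1 j) = c * Lf h (q0 * monom 1 j)" unfolding q_def by (simp add: Lf_smult)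
    then show "Lf h (q * monom 1 j) = 0" using q0(1) \<open>j \<le> p\<close> ker_def by simp
  qed
  moreover have "q \<noteq> 0" unfolding q_def using cnz q0(2) by simp
  moreover have "lead_coeff q = 1" unfolding q_def c_def using q0(2) by simp
  moreover have "degree q \<le> degree w" if "ker p h w" "w \<noteq> 0" for w using minq0[OF that] dq by simp
  ultimately show ?thesis using that by blast
qed

lemma Hm_repr:
  assumes "\<And>t. t \<le> 2 * p \<Longrightarrow> h t = (\<Sum>a\<in>S. \<alpha> a * a ^ t) + (if t = 2 * p then \<beta> else 0)"
  shows "Hm (p+1) h = mat (p+1) (p+1) (\<lambda>(i,j). (\<Sum>a\<in>S. \<alpha> a * a ^ i * a ^ j) + (if i = p \<and> j = p then \<beta> else 0))"
proof (rule eq_matI)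
  fix i j assume ij: "i < dim_row (mat (p+1) (p+1) (\<lambda>(i,j). (\<Sum>a\<in>S. \<alpha> a * a ^ i * a ^ j) + (if i = p \<and> j = p then \<beta> else 0)))"
     "j < dim_col (mat (p+1) (p+1) (\<lambda>(i,j). (\<Sum>a\<in>S. \<alpha> a * a ^ i * a ^ j) + (if i = p \<and> j = p then \<beta> else 0)))"
  then have ij': "i \<le> p" "j \<le> p" by auto
  then have "(i + j = 2 * p) = (i = p \<and> j = p)" by auto
  then show "Hm (p+1) h $$ (i, j) = mat (p+1) (p+1) (\<lambda>(i,j). (\<Sum>a\<in>S. \<alpha> a * a ^ i * a ^ j) + (if i = p \<and> j = p then \<beta> else 0)) $$ (i, j)"
    using ij ij' assms[of "i+j"] by (simp add: Hm_def power_add mult.assoc)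
qed (auto simp: Hm_def)

lemma core_ker:
  assumes p1: "1 \<le> p" and psd: "psd p h" and ex: "\<exists>w. ker p h w \<and> w \<noteq> 0"
  shows "\<exists>S \<alpha> \<beta>. finite S \<and> (\<forall>a\<in>S. \<alpha> a > 0) \<and> \<beta> \<ge> 0 \<and>
     (\<forall>t\<le>2*p. h t = (\<Sum>a\<in>S. \<alpha> a * a ^ t) + (if t = 2*p then \<beta> else 0)) \<and>
     vec_space.rank (p+1) (Hm (p+1) h) = card S + (if \<beta> > 0 then 1 else 0)"
proof -
  obtain q where kq: "ker p h q" and qnz: "q \<noteq> 0" and monic: "lead_coeff q = 1"
    and minq: "\<And>w. ker p h w \<Longrightarrow> w \<noteq> 0 \<Longrightarrow> degree q \<le> degree w"
    using min_ker_exists[OF ex] by blast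
  obtain S where S: "finite S" "card S = degree q" "\<forall>a\<in>S. poly q a = 0"
    using min_ker_roots[OF psd kq qnz minq] by blast
  interpret Q: quad p h q S
    by unfold_locales (use psd p1 kq monic minq S in auto)
  define N where "N = p + 1"
  have rep: "\<And>t. t \<le> 2 * p \<Longrightarrow> h t = (\<Sum>a\<in>S. Q.\<alpha> a * a ^ t) + (if t = 2 * p then Q.\<beta> else 0)"
    by (rule Q.repr)
  have Hr: "Hm N h = mat N N (\<lambda>(i,j). (\<Sum>a\<in>S. Q.\<alpha> a * a ^ i * a ^ j) + (if i = p \<and> j = p then Q.\<beta> else 0))"
    unfolding N_def by (rule Hm_repr[OF rep])
  have dq: "degree q \<le> p" using Q.dq .
  have rank_eq: "vec_space.rank N (Hm N h) = card S + (if Q.\<beta> > 0 then 1 else 0)"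
  proof (cases "Q.\<beta> > 0")
    case False
    then have b0: "Q.\<beta> = 0" using Q.beta_nonneg by simp
    have up: "vec_space.rank N (Hm N h) \<le> card S"
    proof -
      have "Hm N h = mat N N (\<lambda>(i,j). (\<Sum>a\<in>S. Q.\<alpha> a * a ^ i * a ^ j))"
        unfolding Hr b0 by (rule eq_matI) auto
      then show ?thesis using rank_upper[OF S(1), of N Q.\<alpha>] by simp
    qed
    have lo: "card S \<le> vec_space.rank N (Hm N h)"
    proof (rule rank_lower[where sel = "\<lambda>k. k"])
      show "k < N" if "k < card S" for k using that S(2) dq unfolding N_def by simp
      fix y :: "real vec" assume yc: "y \<in> carrier_vec (card S)"
        and hy: "\<And>j. j < N \<Longrightarrow> (\<Sum>k<card S. y $ k * h (j + k)) = 0"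
      have "ker p h (vp (card S) y)" unfolding ker_def
      proof (intro conjI allI impI)
        show "degree (vp (card S) y) \<le> p" using degree_vp[of "card S" y] S(2) dq by simp
        fix j assume "j \<le> p"
        then show "Lf h (vp (card S) y * monom 1 j) = 0"
          using hy[of j] unfolding Lf_vp_monom N_def by (simp add: add.commute)
      qed
      moreover have "degree (vp (card S) y) < degree q" if "vp (card S) y \<noteq> 0"
      proof -
        have "card S \<noteq> 0" by (rule notI) (use that in \<open>simp add: vp_def\<close>)
        then show ?thesis using degree_vp[of "card S" y] S(2) by simp
      qed
      ultimately have "vp (card S) y = 0" using minq by fastforce
      then show "y = 0\<^sub>v (card S)" by (rule vp_zero[OF yc])
    qed
    show ?thesis using up lo False by simp
  next
    case True
    have dlt: "degree q < p" using True Q.beta_zero dq by fastforce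
    define d where "d = degree q"
    have up: "vec_space.rank N (Hm N h) \<le> card S + 1"
      unfolding Hr by (rule rank_upper2[OF S(1)])
    have lo: "card S + 1 \<le> vec_space.rank N (Hm N h)"
    proof (rule rank_lower[where sel = "\<lambda>k. if k < d then k else p"])
      show "(if k < d then k else p) < N" if "k < card S + 1" for k using dlt unfolding N_def d_def by simp
      fix y :: "real vec" assume yc: "y \<in> carrier_vec (card S + 1)"
        and hy: "\<And>j. j < N \<Longrightarrow> (\<Sum>k<card S + 1. y $ k * h (j + (if k < d then k else p))) = 0"
      define w0 where "w0 = vp d y"
      define w where "w = w0 + monom (y $ d) p"
      have cSd: "card S = d" using S(2) d_def by simp
      have dw0: "degree w0 < p" using degree_vp[of d y] dlt unfolding w0_def d_def by linarith
      have "ker p h w" unfolding ker_def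
      proof (intro conjI allI impI)
        show "degree w \<le> p" unfolding w_def using dw0
          by (intro degree_add_le) (auto simp: degree_monom_le)
        fix j assume "j \<le> p"
        have "Lf h (w * monom 1 j) = (\<Sum>k<d. y $ k * h (k + j)) + y $ d * h (p + j)"
          unfolding w_def w0_def by (simp add: distrib_right Lf_add Lf_vp_monom mult_monom Lf_monom)
        also have "\<dots> = (\<Sum>k<card S + 1. y $ k * h (j + (if k < d then k else p)))"
          unfolding cSd by (simp add: add.commute)
        also have "\<dots> = 0" using hy[of j] \<open>j \<le> p\<close> unfolding N_def by simp
        finally show "Lf h (w * monom 1 j) = 0" .
      qed
      then have "Lf h (w * Q.u) = 0" using Q.du by (intro ker_mult) auto
      moreover have "degree (w * Q.u) \<le> 2 * p"
        using degree_mult_le[of w Q.u] Q.du \<open>ker p h w\<close> ker_def by fastforce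
      ultimately have "0 = (\<Sum>a\<in>S. Q.\<alpha> a * poly (w * Q.u) a) + Q.\<beta> * coeff (w * Q.u) (2 * p)"
        using Q.quad2 by simp
      moreover have "(\<Sum>a\<in>S. Q.\<alpha> a * poly (w * Q.u) a) = 0" by (simp add: Q.u_roots)
      moreover have "coeff (w * Q.u) (2 * p) = y $ d"
      proof -
        have "degree (w0 * Q.u) < 2 * p" using degree_mult_le[of w0 Q.u] Q.du dw0 by linarith
        then have "coeff (w0 * Q.u) (2 * p) = 0" by (simp add: coeff_eq_0)
        moreover have "coeff (monom (y $ d) p * Q.u) (2 * p) = y $ d"
          using Q.lu Q.du by (simp add: coeff_monom_mult mult_2)
        ultimately show ?thesis unfolding w_def by (simp add: distrib_right)
      qed
      ultimately have yd: "y $ d = 0" using True by simp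
      then have "w = w0" unfolding w_def by simp
      then have "ker p h w0" using \<open>ker p h w\<close> by simp
      moreover have "degree w0 < degree q" if "w0 \<noteq> 0"
      proof -
        have "d \<noteq> 0" by (rule notI) (use that in \<open>simp add: w0_def vp_def\<close>)
        then show ?thesis using degree_vp[of d y] unfolding w0_def d_def by simp
      qed
      ultimately have w00: "w0 = 0" using minq by fastforce
      show "y = 0\<^sub>v (card S + 1)"
      proof (rule eq_vecI)
        fix k assume "k < dim_vec (0\<^sub>v (card S + 1) :: real vec)"
        then have "k \<le> d" using cSd by simp
        show "y $ k = 0\<^sub>v (card S + 1) $ k"
        proof (cases "k = d")
          case True then show ?thesis using yd cSd by simp
        next
          case False
          then have "k < d" using \<open>k \<le> d\<close> by simp
          then have "coeff w0 k = y $ k" unfolding w0_def by (simp add: coeff_vp)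
          then show ?thesis using w00 \<open>k < d\<close> cSd by simp
        qed
      qed (use yc in simp)
    qed
    show ?thesis using up lo True by simp
  qed
  show ?thesis
    by (rule exI[of _ S], rule exI[of _ Q.\<alpha>], rule exI[of _ Q.\<beta>])
       (use S(1) Q.alpha_pos Q.beta_nonneg rep rank_eq in \<open>auto simp: N_def\<close>)
qed



lemma sq_expand: "w = c * q + r \<Longrightarrow> w * w = c * c * (q * q) + (c + c) * (q * r) + r * r"
  for w c q r :: "'a::comm_ring" by (simp add: algebra_simps)

lemma core_pd:
  assumes p1: "1 \<le> p" and psd: "psd p h" and nex: "\<And>w. ker p h w \<Longrightarrow> w = 0"
  shows "\<exists>S \<alpha> \<beta>. finite S \<and> (\<forall>a\<in>S. \<alpha> a > 0) \<and> \<beta> \<ge> 0 \<and>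
     (\<forall>t\<le>2*p. h t = (\<Sum>a\<in>S. \<alpha> a * a ^ t) + (if t = 2*p then \<beta> else 0)) \<and>
     vec_space.rank (p+1) (Hm (p+1) h) = card S + (if \<beta> > 0 then 1 else 0)"
proof -
  define N where "N = p + 1"
  define H where "H = Hm N h"
  have Hc: "H \<in> carrier_mat N N" unfolding H_def Hm_def by simp
  have "det H \<noteq> 0"
  proof
    assume "det H = 0"
    then obtain v where v: "v \<in> carrier_vec N" "v \<noteq> 0\<^sub>v N" "H *\<^sub>v v = 0\<^sub>v N"
      using det_0_iff_vec_prod_zero[OF Hc] by blast
    then have "ker p h (vp N v)" using ker_iff[of N p v h] unfolding H_def N_def by simp
    then have "vp N v = 0" by (rule nex)
    then show False using vp_zero[OF v(1)] v(2) by simp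
  qed
  then have "H \<in> Units (ring_mat TYPE(real) N undefined)" by (rule det_non_zero_imp_unit[OF Hc])
  then obtain B where Bc: "B \<in> carrier_mat N N" and HB: "H * B = 1\<^sub>m N"
    unfolding Units_def ring_mat_def by auto
  define bv where "bv = vec N (\<lambda>j. if j < p then h (p + 1 + j) else 0)"
  define a where "a = B *\<^sub>v (- bv)"
  have ac: "a \<in> carrier_vec N" unfolding a_def bv_def using Bc by simp
  have Ha: "H *\<^sub>v a = - bv"
  proof -
    have "H *\<^sub>v a = (H * B) *\<^sub>v (- bv)" unfolding a_def
      using Hc Bc by (simp add: assoc_mult_mat_vec bv_def)
    then show ?thesis unfolding HB by (simp add: bv_def)
  qed
  define g1 where "g1 t = (if t = 2 * p + 1 then 0 else h t)" for t
  define c where "c = - (\<Sum>i<N. a $ i * g1 (i + p + 1))"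
  define h' where "h' t = (if t = 2 * p + 2 then c else g1 t)" for t
  have hh: "h' t = h t" if "t \<le> 2 * p" for t using that unfolding h'_def g1_def by simp
  define q where "q = monom 1 (p+1) + vp N a"
  have dvp: "degree (vp N a) < p + 1" using degree_vp[of N a] unfolding N_def by simp
  have dq: "degree q = p + 1" unfolding q_def using dvp
    by (subst degree_add_eq_left) (simp_all add: degree_monom_eq)
  have lq: "lead_coeff q = 1" unfolding dq unfolding q_def using dvp by (simp add: coeff_eq_0)
  have qnz: "q \<noteq> 0" using lq by auto
  have kq: "ker (p+1) h' q" unfolding ker_def
  proof (intro conjI allI impI)
    show "degree q \<le> p + 1" using dq by simp
    fix j assume j: "j \<le> p + 1"
    have e: "Lf h' (q * monom 1 j) = h' (p + 1 + j) + (\<Sum>i<N. a $ i * h' (i + j))"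
      unfolding q_def by (simp add: distrib_right Lf_add mult_monom Lf_monom Lf_vp_monom)
    show "Lf h' (q * monom 1 j) = 0"
    proof (cases "j \<le> p")
      case True
      have "(\<Sum>i<N. a $ i * h' (i + j)) = (\<Sum>i<N. a $ i * h (i + j))"
        by (rule sum.cong) (use True in \<open>auto simp: hh N_def\<close>)
      also have "\<dots> = (H *\<^sub>v a) $ j" unfolding H_def
        using Hm_mult[OF ac, of j h] True Lf_vp_monom[of h N a j] unfolding N_def by simp
      also have "\<dots> = - h' (p + 1 + j)" unfolding Ha using True
        by (auto simp: bv_def h'_def g1_def N_def)
      finally show ?thesis using e by simp
    next
      case False
      then have jp: "j = p + 1" using j by simp
      have "(\<Sum>i<N. a $ i * h' (i + j)) = (\<Sum>i<N. a $ i * g1 (i + p + 1))"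
        by (rule sum.cong) (auto simp: h'_def jp N_def add.assoc)
      then show ?thesis using e jp by (simp add: h'_def mult_2 c_def)
    qed
  qed
  have psd': "psd (p+1) h'" unfolding psd_def
  proof (intro allI impI)
    fix w :: "real poly" assume dw: "degree w \<le> p + 1"
    define cw where "cw = coeff w (p+1)"
    define r where "r = w - [:cw:] * q"
    have dr: "degree r \<le> p"
    proof -
      have "degree r \<le> p + 1" unfolding r_def using dw dq
        by (intro degree_diff_le) (auto intro: order.trans[OF degree_mult_le])
      moreover have "coeff r (p + 1) = 0" unfolding r_def cw_def using lq dq by simp
      ultimately show ?thesis
        by (metis Suc_eq_plus1 le_SucE leading_coeff_0_iff degree_0 le0)
    qed
    have "w = [:cw:] * q + r" unfolding r_def by simp
    then have "w * w = [:cw:] * [:cw:] * (q * q) + ([:cw:] + [:cw:]) * (q * r) + r * r"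
      by (rule sq_expand)
    moreover have "Lf h' (q * q) = 0" by (rule ker_mult[OF kq]) (use dq in simp)
    moreover have "Lf h' (q * r) = 0" by (rule ker_mult[OF kq]) (use dr in simp)
    ultimately have "Lf h' (w * w) = Lf h' (r * r)" by (simp add: Lf_add Lf_smult)
    also have "\<dots> = Lf h (r * r)"
      by (rule Lf_cong[of _ "2 * p"]) (use dr degree_mult_le[of r r] hh in auto)
    also have "\<dots> \<ge> 0" using psd dr unfolding psd_def by simp
    finally show "Lf h' (w * w) \<ge> 0" .
  qed
  have minq: "degree q \<le> degree w" if "ker (p+1) h' w" "w \<noteq> 0" for w
  proof (rule ccontr)
    assume "\<not> degree q \<le> degree w"
    then have dw: "degree w \<le> p" using dq by simp
    have "Lf h' (w * w) = 0" by (rule ker_mult[OF that(1)]) (use dw in simp)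
    moreover have "Lf h' (w * w) = Lf h (w * w)"
      by (rule Lf_cong[of _ "2 * p"]) (use dw degree_mult_le[of w w] hh in auto)
    ultimately have "ker p h w" using psd dw by (intro cs_ker) auto
    then show False using nex that(2) by simp
  qed
  obtain S where S: "finite S" "card S = degree q" "\<forall>a\<in>S. poly q a = 0"
    using min_ker_roots[OF psd' kq qnz minq] by blast
  interpret Q: quad "p+1" h' q S
    by unfold_locales (use psd' kq lq minq S in auto)
  have b0: "Q.\<beta> = 0" using Q.beta_zero dq by simp
  have rep: "\<forall>t\<le>2*p. h t = (\<Sum>a\<in>S. Q.\<alpha> a * a ^ t) + (if t = 2*p then 0 else 0)"
  proof (intro allI impI)
    fix t assume "t \<le> 2 * p"
    then show "h t = (\<Sum>a\<in>S. Q.\<alpha> a * a ^ t) + (if t = 2*p then 0 else 0)"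
      using Q.repr[of t] hh[of t] b0 by simp
  qed
  have up: "vec_space.rank N H \<le> N" by (rule vec_space.rank_le_nc[OF Hc])
  have lo: "N \<le> vec_space.rank N (Hm N h)"
  proof (rule rank_lower[where sel = "\<lambda>k. k"])
    fix y :: "real vec" assume yc: "y \<in> carrier_vec N"
      and hy: "\<And>j. j < N \<Longrightarrow> (\<Sum>k<N. y $ k * h (j + k)) = 0"
    have "ker p h (vp N y)" unfolding ker_def
    proof (intro conjI allI impI)
      show "degree (vp N y) \<le> p" using degree_vp[of N y] unfolding N_def by simp
      fix j assume "j \<le> p"
      then show "Lf h (vp N y * monom 1 j) = 0"
        using hy[of j] unfolding Lf_vp_monom N_def by (simp add: add.commute)
    qed
    then have "vp N y = 0" by (rule nex)
    then show "y = 0\<^sub>v N" by (rule vp_zero[OF yc])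
  qed simp
  have "vec_space.rank N H = card S" using up lo S(2) dq unfolding H_def N_def by simp
  then show ?thesis
    by (intro exI[of _ S] exI[of _ Q.\<alpha>] exI[of _ 0])
       (use S(1) Q.alpha_pos rep in \<open>auto simp: H_def N_def\<close>)
qed



theorem core:
  assumes "1 \<le> p" "psd p h"
  shows "\<exists>S \<alpha> \<beta>. finite S \<and> (\<forall>a\<in>S. \<alpha> a > 0) \<and> \<beta> \<ge> 0 \<and>
     (\<forall>t\<le>2*p. h t = (\<Sum>a\<in>S. \<alpha> a * a ^ t) + (if t = 2*p then \<beta> else 0)) \<and>
     vec_space.rank (p+1) (Hm (p+1) h) = card S + (if \<beta> > 0 then 1 else 0)"
proof (cases "\<exists>w. ker p h w \<and> w \<noteq> 0")
  case True then show ?thesis using core_ker[OF assms] by blast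
next
  case False then show ?thesis using core_pd[OF assms] by blast
qed

lemma coeff_sq_top:
  assumes "degree w \<le> p"
  shows "coeff (w * w) (2 * p) = coeff w p * coeff w p"
proof (cases "degree w = p")
  case True
  then show ?thesis using coeff_mult_degree_sum[of w w] by (simp add: mult_2)
next
  case False
  then have "degree w < p" using assms by simp
  then have "degree (w * w) < 2 * p" using degree_mult_le[of w w] by linarith
  then show ?thesis using \<open>degree w < p\<close> by (simp add: coeff_eq_0)
qed

lemma poly_bound: "degree f \<le> B \<Longrightarrow> poly f x = (\<Sum>i\<le>B. coeff f i * x ^ i)" for f :: "real poly"
proof -
  assume "degree f \<le> B"
  have "poly f x = (\<Sum>i\<le>degree f. coeff f i * x ^ i)" by (rule poly_altdef)
  also have "\<dots> = (\<Sum>i\<le>B. coeff f i * x ^ i)"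
    by (rule sum.mono_neutral_left) (use \<open>degree f \<le> B\<close> in \<open>auto simp: coeff_eq_0\<close>)
  finally show ?thesis .
qed

lemma psd_of_repr:
  fixes I :: "nat set" and \<alpha> \<xi> :: "nat \<Rightarrow> real"
  assumes fin: "finite I" and apos: "\<forall>k\<in>I. \<alpha> k \<ge> 0" and bpos: "\<beta> \<ge> 0"
    and rep: "\<And>t. t \<le> 2*p \<Longrightarrow> h t = (\<Sum>k\<in>I. \<alpha> k * \<xi> k ^ t) + (if t = 2*p then \<beta> else 0)"
  shows "psd p h"
  unfolding psd_def
proof (intro allI impI)
  fix w :: "real poly" assume dw: "degree w \<le> p"
  define f where "f = w * w"
  have df: "degree f \<le> 2 * p" unfolding f_def using degree_mult_le[of w w] dw by linarith
  have "Lf h f = (\<Sum>i\<le>2*p. coeff f i * h i)" by (rule Lf_bound[OF df])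
  also have "\<dots> = (\<Sum>i\<le>2*p. (\<Sum>k\<in>I. coeff f i * (\<alpha> k * \<xi> k ^ i)) + coeff f i * (if i = 2*p then \<beta> else 0))"
    by (rule sum.cong) (simp_all add: rep distrib_left sum_distrib_left)
  also have "\<dots> = (\<Sum>k\<in>I. \<Sum>i\<le>2*p. coeff f i * (\<alpha> k * \<xi> k ^ i)) + coeff f (2*p) * \<beta>"
  proof -
    have "(\<Sum>i\<le>2*p. coeff f i * (if i = 2*p then \<beta> else 0)) = (\<Sum>i\<le>2*p. if i = 2*p then coeff f i * \<beta> else 0)"
      by (rule sum.cong) auto
    also have "\<dots> = coeff f (2*p) * \<beta>" by (subst sum.delta) auto
    finally have e2: "(\<Sum>i\<le>2*p. coeff f i * (if i = 2*p then \<beta> else 0)) = coeff f (2*p) * \<beta>" .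
    have e1: "(\<Sum>i\<le>2*p. \<Sum>k\<in>I. coeff f i * (\<alpha> k * \<xi> k ^ i)) = (\<Sum>k\<in>I. \<Sum>i\<le>2*p. coeff f i * (\<alpha> k * \<xi> k ^ i))"
      by (rule sum.swap)
    show ?thesis by (simp only: sum.distrib e1 e2)
  qed
  also have "\<dots> = (\<Sum>k\<in>I. \<alpha> k * poly f (\<xi> k)) + coeff f (2*p) * \<beta>"
    by (simp add: poly_bound[OF df] sum_distrib_left ac_simps)
  also have "\<dots> \<ge> 0"
  proof -
    have "(\<Sum>k\<in>I. \<alpha> k * poly f (\<xi> k)) \<ge> 0"
      using apos by (intro sum_nonneg) (simp add: f_def)
    moreover have "coeff f (2*p) * \<beta> \<ge> 0" using bpos coeff_sq_top[OF dw] by (simp add: f_def)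
    ultimately show ?thesis by simp
  qed
  finally show "Lf h (w * w) \<ge> 0" unfolding f_def .
qed

lemma tidx_sum_le:
  assumes "i \<in> tensor_idx m n"
  shows "(\<Sum>j<m. i j) \<le> m * (n - 1)"
proof -
  have "(\<Sum>j<m. i j) \<le> (\<Sum>j<m. n - 1)"
    by (rule sum_mono) (use assms in \<open>auto simp: tensor_idx_def\<close>)
  then show ?thesis by simp
qed

lemma tidx_exists:
  assumes "1 \<le> n"
  shows "t \<le> m * (n - 1) \<Longrightarrow> \<exists>i\<in>tensor_idx m n. (\<Sum>j<m. i j) = t"
proof (induction m arbitrary: t)
  case 0
  then show ?case by (auto simp: tensor_idx_def)
next
  case (Suc m)
  define l where "l = min t (n - 1)"
  have "t - l \<le> m * (n - 1)" using Suc.prems unfolding l_def by (auto simp: min_def)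
  then obtain i where i: "i \<in> tensor_idx m n" "(\<Sum>j<m. i j) = t - l" using Suc.IH by blast
  define i' where "i' = i(m := l)"
  have "i' \<in> tensor_idx (Suc m) n"
    using i(1) assms unfolding i'_def tensor_idx_def l_def by (auto simp: less_Suc_eq)
  moreover have "(\<Sum>j<Suc m. i' j) = t"
  proof -
    have "(\<Sum>j<m. i' j) = (\<Sum>j<m. i j)" by (rule sum.cong) (auto simp: i'_def)
    then show ?thesis using i(2) unfolding i'_def l_def by simp
  qed
  ultimately show ?case by blast
qed

lemma r1_vand: "rank1_tensor m (vand_vec x) i = x ^ (\<Sum>j<m. i j)"
  by (simp add: rank1_tensor_def vand_vec_def power_sum)

lemma r1_e:
  assumes "i \<in> tensor_idx m n"
  shows "rank1_tensor m (e_last n) i = (if (\<Sum>j<m. i j) = m * (n - 1) then 1 else 0)"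
proof (cases "\<forall>j<m. i j = n - 1")
  case True
  then have "(\<Sum>j<m. i j) = m * (n - 1)" by simp
  moreover have "rank1_tensor m (e_last n) i = 1"
    unfolding rank1_tensor_def e_last_def using True by simp
  ultimately show ?thesis by simp
next
  case False
  then obtain j0 where j0: "j0 < m" "i j0 \<noteq> n - 1" by blast
  then have "i j0 < n - 1" using assms unfolding tensor_idx_def by force
  have "(\<Sum>j<m. i j) < (\<Sum>j<m. n - 1)"
    by (rule sum_strict_mono_ex1) (use assms j0 \<open>i j0 < n - 1\<close> in \<open>auto simp: tensor_idx_def\<close>)
  moreover have "rank1_tensor m (e_last n) i = 0"
    unfolding rank1_tensor_def e_last_def using j0 by (intro prod_zero) auto
  ultimately show ?thesis by simp
qed



theorem theorem4:
  fixes m n :: nat and h :: "nat \<Rightarrow> real"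
  assumes "m \<ge> 2" and "n \<ge> 2" and "even (m * (n - 1))"
  defines "r \<equiv> mat_rank (hankel_matrix m n h)"
  shows "strong_hankel m n h \<longleftrightarrow>
    ((\<exists>\<alpha> \<xi> :: nat \<Rightarrow> real. (\<forall>k\<in>{1..r}. \<alpha> k > 0) \<and>
        (\<forall>i\<in>tensor_idx m n. hankel_tensor m h i =
            (\<Sum>k=1..r. \<alpha> k * rank1_tensor m (vand_vec (\<xi> k)) i)))
     \<or>
     (\<exists>\<alpha> \<xi> :: nat \<Rightarrow> real. r \<ge> 1 \<and> (\<forall>k\<in>{1..r}. \<alpha> k > 0) \<and>
        (\<forall>i\<in>tensor_idx m n. hankel_tensor m h i =
            (\<Sum>k=1..r-1. \<alpha> k * rank1_tensor m (vand_vec (\<xi> k)) i)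
            + \<alpha> r * rank1_tensor m (e_last n) i)))"
proof -
  define p where "p = m * (n - 1) div 2"
  have p2: "2 * p = m * (n - 1)" using assms(3) unfolding p_def by simp
  have "m * (n - 1) \<ge> 2 * 1" using assms(1,2) by (intro mult_mono) auto
  then have p1: "1 \<le> p" using p2 by simp
  have n1: "1 \<le> n" using assms(2) by simp
  have HM: "hankel_matrix m n h = Hm (p+1) h"
    unfolding hankel_matrix_def Hm_def hankel_size_def p_def by simp
  have rr: "r = vec_space.rank (p+1) (Hm (p+1) h)"
    unfolding r_def mat_rank_def HM by (simp add: Hm_def)
  have sh: "strong_hankel m n h \<longleftrightarrow> psd p h"
    unfolding strong_hankel_def HM by (rule psd_iff) simp
  have tval: "hankel_tensor m h i = h (\<Sum>j<m. i j)" for i by (simp add: hankel_tensor_def)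
  have tle: "(\<Sum>j<m. i j) \<le> 2 * p" if "i \<in> tensor_idx m n" for i
    using tidx_sum_le[OF that] p2 by simp
  show ?thesis
  proof
    assume "strong_hankel m n h"
    then have "psd p h" using sh by simp
    from core[OF p1 this] obtain S \<alpha> \<beta> where
      finS: "finite S" and apos: "\<forall>a\<in>S. \<alpha> a > 0" and bnn: "\<beta> \<ge> 0"
      and rep: "\<forall>t\<le>2*p. h t = (\<Sum>a\<in>S. \<alpha> a * a ^ t) + (if t = 2*p then \<beta> else 0)"
      and rk: "vec_space.rank (p+1) (Hm (p+1) h) = card S + (if \<beta> > 0 then 1 else 0)"
      by blast
    obtain f where bij: "bij_betw f {1..card S} S" using ex_bij_betw_nat_finite_1[OF finS] by blast
    have sumre: "(\<Sum>k=1..card S. g (f k)) = (\<Sum>a\<in>S. g a)" for g :: "real \<Rightarrow> real"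
      by (rule sum.reindex_bij_betw[OF bij])
    have fS: "f k \<in> S" if "k \<in> {1..card S}" for k using bij that by (meson bij_betwE)
    show "(\<exists>\<alpha> \<xi> :: nat \<Rightarrow> real. (\<forall>k\<in>{1..r}. \<alpha> k > 0) \<and>
        (\<forall>i\<in>tensor_idx m n. hankel_tensor m h i =
            (\<Sum>k=1..r. \<alpha> k * rank1_tensor m (vand_vec (\<xi> k)) i)))
     \<or>
     (\<exists>\<alpha> \<xi> :: nat \<Rightarrow> real. r \<ge> 1 \<and> (\<forall>k\<in>{1..r}. \<alpha> k > 0) \<and>
        (\<forall>i\<in>tensor_idx m n. hankel_tensor m h i =
            (\<Sum>k=1..r-1. \<alpha> k * rank1_tensor m (vand_vec (\<xi> k)) i)
            + \<alpha> r * rank1_tensor m (e_last n) i))"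
    proof (cases "\<beta> > 0")
      case False
      then have b0: "\<beta> = 0" using bnn by simp
      have rS: "r = card S" using rk rr False by simp
      have "(\<forall>k\<in>{1..r}. \<alpha> (f k) > 0) \<and>
        (\<forall>i\<in>tensor_idx m n. hankel_tensor m h i =
            (\<Sum>k=1..r. \<alpha> (f k) * rank1_tensor m (vand_vec (f k)) i))"
      proof (intro conjI ballI)
        fix k assume "k \<in> {1..r}" then show "\<alpha> (f k) > 0" using fS apos rS by simp
      next
        fix i assume "i \<in> tensor_idx m n"
        then have "hankel_tensor m h i = (\<Sum>a\<in>S. \<alpha> a * a ^ (\<Sum>j<m. i j))"
          using rep tle b0 tval by simp
        also have "\<dots> = (\<Sum>k=1..r. \<alpha> (f k) * f k ^ (\<Sum>j<m. i j))" unfolding rS by (rule sumre[symmetric])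
        finally show "hankel_tensor m h i = (\<Sum>k=1..r. \<alpha> (f k) * rank1_tensor m (vand_vec (f k)) i)"
          by (simp add: r1_vand)
      qed
      then show ?thesis by (intro disjI1 exI[of _ "\<lambda>k. \<alpha> (f k)"] exI[of _ f]) simp
    next
      case True
      have rS: "r = card S + 1" using rk rr True by simp
      define \<alpha>' where "\<alpha>' k = (if k = card S + 1 then \<beta> else \<alpha> (f k))" for k
      have "r \<ge> 1 \<and> (\<forall>k\<in>{1..r}. \<alpha>' k > 0) \<and>
        (\<forall>i\<in>tensor_idx m n. hankel_tensor m h i =
            (\<Sum>k=1..r-1. \<alpha>' k * rank1_tensor m (vand_vec (f k)) i)
            + \<alpha>' r * rank1_tensor m (e_last n) i)"
      proof (intro conjI ballI)
        show "r \<ge> 1" using rS by simp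
      next
        fix k assume "k \<in> {1..r}" then show "\<alpha>' k > 0"
          using fS apos rS True unfolding \<alpha>'_def by (cases "k = card S + 1") auto
      next
        fix i assume it: "i \<in> tensor_idx m n"
        have "(\<Sum>k=1..r-1. \<alpha>' k * rank1_tensor m (vand_vec (f k)) i)
            = (\<Sum>k=1..card S. \<alpha> (f k) * f k ^ (\<Sum>j<m. i j))"
          unfolding rS by (intro sum.cong) (auto simp: \<alpha>'_def r1_vand)
        also have "\<dots> = (\<Sum>a\<in>S. \<alpha> a * a ^ (\<Sum>j<m. i j))" by (rule sumre)
        finally have e1: "(\<Sum>k=1..r-1. \<alpha>' k * rank1_tensor m (vand_vec (f k)) i)
            = (\<Sum>a\<in>S. \<alpha> a * a ^ (\<Sum>j<m. i j))" .
        have e2: "\<alpha>' r * rank1_tensor m (e_last n) i = (if (\<Sum>j<m. i j) = 2 * p then \<beta> else 0)"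
          unfolding r1_e[OF it] rS \<alpha>'_def p2 by simp
        show "hankel_tensor m h i =
            (\<Sum>k=1..r-1. \<alpha>' k * rank1_tensor m (vand_vec (f k)) i)
            + \<alpha>' r * rank1_tensor m (e_last n) i"
          unfolding e1 e2 tval using rep tle[OF it] by simp
      qed
      then show ?thesis by (intro disjI2 exI[of _ \<alpha>'] exI[of _ f]) simp
    qed
  next
    assume D: "(\<exists>\<alpha> \<xi> :: nat \<Rightarrow> real. (\<forall>k\<in>{1..r}. \<alpha> k > 0) \<and>
        (\<forall>i\<in>tensor_idx m n. hankel_tensor m h i =
            (\<Sum>k=1..r. \<alpha> k * rank1_tensor m (vand_vec (\<xi> k)) i)))
     \<or>
     (\<exists>\<alpha> \<xi> :: nat \<Rightarrow> real. r \<ge> 1 \<and> (\<forall>k\<in>{1..r}. \<alpha> k > 0) \<and>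
        (\<forall>i\<in>tensor_idx m n. hankel_tensor m h i =
            (\<Sum>k=1..r-1. \<alpha> k * rank1_tensor m (vand_vec (\<xi> k)) i)
            + \<alpha> r * rank1_tensor m (e_last n) i))"
    have "psd p h"
      using D
    proof (elim disjE exE conjE)
      fix \<alpha> \<xi> :: "nat \<Rightarrow> real"
      assume apos: "\<forall>k\<in>{1..r}. \<alpha> k > 0"
        and T: "\<forall>i\<in>tensor_idx m n. hankel_tensor m h i = (\<Sum>k=1..r. \<alpha> k * rank1_tensor m (vand_vec (\<xi> k)) i)"
      show "psd p h"
      proof (rule psd_of_repr[of "{1..r}" \<alpha> 0 p h \<xi>])
        show "\<forall>k\<in>{1..r}. 0 \<le> \<alpha> k" using apos by (simp add: less_imp_le)
        fix t assume "t \<le> 2 * p"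
        then obtain i where i: "i \<in> tensor_idx m n" "(\<Sum>j<m. i j) = t"
          using tidx_exists[OF n1, of t m] p2 by auto
        then show "h t = (\<Sum>k\<in>{1..r}. \<alpha> k * \<xi> k ^ t) + (if t = 2 * p then 0 else 0)"
          using T tval[of i] by (simp add: r1_vand)
      qed auto
    next
      fix \<alpha> \<xi> :: "nat \<Rightarrow> real"
      assume r1: "r \<ge> 1" and apos: "\<forall>k\<in>{1..r}. \<alpha> k > 0"
        and T: "\<forall>i\<in>tensor_idx m n. hankel_tensor m h i =
            (\<Sum>k=1..r-1. \<alpha> k * rank1_tensor m (vand_vec (\<xi> k)) i) + \<alpha> r * rank1_tensor m (e_last n) i"
      show "psd p h"
      proof (rule psd_of_repr[of "{1..r-1}" \<alpha> "\<alpha> r" p h \<xi>])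
        show "\<forall>k\<in>{1..r-1}. 0 \<le> \<alpha> k" using apos by (auto simp: less_imp_le)
        show "0 \<le> \<alpha> r" using apos r1 by (auto simp: less_imp_le)
        fix t assume "t \<le> 2 * p"
        then obtain i where i: "i \<in> tensor_idx m n" "(\<Sum>j<m. i j) = t"
          using tidx_exists[OF n1, of t m] p2 by auto
        have e0: "h t = hankel_tensor m h i" using tval[of i] i(2) by simp
        have e1: "hankel_tensor m h i = (\<Sum>k=1..r-1. \<alpha> k * \<xi> k ^ t) + \<alpha> r * rank1_tensor m (e_last n) i"
          using T i by (simp add: r1_vand)
        have e2: "rank1_tensor m (e_last n) i = (if t = 2*p then 1 else 0)"
          using r1_e[OF i(1)] i(2) p2 by simp
        show "h t = (\<Sum>k\<in>{1..r-1}. \<alpha> k * \<xi> k ^ t) + (if t = 2 * p then \<alpha> r else 0)"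
          unfolding e0 e1 e2 by simp
      qed auto
    qed
    then show "strong_hankel m n h" using sh by simp
  qed
qed


end
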